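(* Let $K\ge 2$ and $\Theta=\{(\theta_1,\ldots,\theta_K):\sum_k\theta_k=1,\ \theta_k\ge0\}$. Consider Dempster's Simplex-DSM posterior for a multinomial sample of size $n=1$ with observation $X=1$: its random focal elements are $$\mathbf e(Z)=\Big\{\theta\in\Theta:\ \frac{Z_1}{\theta_1}\le\frac{Z_j}{\theta_j},\ j=2,\ldots,K\Big\},\qquad Z_1,\ldots,Z_K\stackrel{iid}{\sim}\mathrm{Expo}(1).$$ Fix $\theta_1\in(0,1)$ and consider the conditional posterior model for $\theta_{-1}\equiv(\theta_2,\ldots,\theta_K)/(1-\theta_1)$ given this value of $\theta_1$ (obtained by intersecting each focal element with $\{\theta\in\Theta:\ \text{first coordinate}=\theta_1\}$, conditioning on non-empty intersection, and mapping the result to the values of $\theta_{-1}$, which lie in the $(K-2)$-simplex $\mathcal S_{K-2}$). Then the vacuous focal element $\mathcal S_{K-2}$ receives mass $$\Pr(\mathcal S_{K-2})=\frac{1}{1+(K-2)(1-\theta_1)}\cdot\frac{1}{1+\sum_{i=1}^{K-2}(1-\theta_1)^i}.$$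
   Context: A Dempster–Shafer model (DSM) here is a random set (focal element) in the parameter space; conditioning a DSM on an event means intersecting the random set with that event and restricting to (conditioning on) non-empty intersections. The mass of $\mathcal S_{K-2}$ is the conditional probability that the resulting random set of $\theta_{-1}$-values is all of $\mathcal S_{K-2}$. *)

theory Defs
  imports "HOL-Probability.Probability"
begin

text \<open>Probability prob_simplex with coordinates indexed by 1..m (extensional functions).
  Theta = prob_simplex K; S_{K-2} = prob_simplex (K-1).\<close>
definition prob_simplex :: "nat \<Rightarrow> (nat \<Rightarrow> real) set" where
  "prob_simplex m = {x. x \<in> ({1..m} \<rightarrow>\<^sub>E UNIV) \<and> (\<forall>i\<in>{1..m}. 0 \<le> x i) \<and> (\<Sum>i=1..m. x i) = 1}"

definition Zmeasure :: "nat \<Rightarrow> (nat \<Rightarrow> real) measure" where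
  "Zmeasure K = PiM {1..K} (\<lambda>_. density lborel (exponential_density 1))"

text \<open>Focal element e(Z) of the Simplex-DSM posterior for n = 1, X = 1.
  Ratios are taken in the extended reals, so z/0 = +infinity for z > 0.\<close>
definition focal :: "nat \<Rightarrow> (nat \<Rightarrow> real) \<Rightarrow> (nat \<Rightarrow> real) set" where
  "focal K Z = {\<theta> \<in> prob_simplex K. \<forall>j\<in>{2..K}.
      ereal (Z 1) / ereal (\<theta> 1) \<le> ereal (Z j) / ereal (\<theta> j)}"

text \<open>Conditional focal element for theta_{-1} = (theta_2,...,theta_K)/(1-theta_1) given theta_1 = t,
  as a set of points of prob_simplex (K-1) (coordinate j of theta_{-1} is theta_{j+1}/(1-t)).\<close>
definition cond_focal :: "nat \<Rightarrow> real \<Rightarrow> (nat \<Rightarrow> real) \<Rightarrow> (nat \<Rightarrow> real) set" where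
  "cond_focal K t Z = (\<lambda>\<theta>. restrict (\<lambda>j. \<theta> (j + 1) / (1 - t)) {1..K-1})
      ` (focal K Z \<inter> {\<theta>. \<theta> 1 = t})"

end

theory Submission
  imports Defs
begin


lemma vertex_in:
  assumes "j \<in> {1..m}"
  shows "restrict (\<lambda>i. if i = j then 1 else 0) {1..m} \<in> prob_simplex m"
  unfolding prob_simplex_def using assms by (auto simp: sum.delta)

lemma simplex_le1:
  assumes "w \<in> prob_simplex m" "j \<in> {1..m}"
  shows "0 \<le> w j" "w j \<le> 1"
proof -
  have nn: "\<forall>i\<in>{1..m}. 0 \<le> w i" and s: "(\<Sum>i=1..m. w i) = 1" using assms(1) unfolding prob_simplex_def by auto
  show "0 \<le> w j" using nn assms(2) by auto
  have "w j \<le> (\<Sum>i=1..m. w i)" using nn assms(2) by (intro member_le_sum) auto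
  then show "w j \<le> 1" using s by simp
qed

lemma full_char:
  fixes lo :: "nat \<Rightarrow> real" and hi :: "nat \<Rightarrow> ereal"
  assumes m: "1 \<le> m"
  shows "(\<forall>w\<in>prob_simplex m. \<forall>j\<in>{1..m}. lo j \<le> w j \<and> ereal (w j) \<le> hi j) \<longleftrightarrow>
         (\<forall>j\<in>{1..m}. lo j \<le> (if m = 1 then 1 else 0) \<and> 1 \<le> hi j)"
proof
  assume H: "\<forall>w\<in>prob_simplex m. \<forall>j\<in>{1..m}. lo j \<le> w j \<and> ereal (w j) \<le> hi j"
  show "\<forall>j\<in>{1..m}. lo j \<le> (if m = 1 then 1 else 0) \<and> 1 \<le> hi j"
  proof
    fix j assume j: "j \<in> {1..m}"
    have "lo j \<le> 1 \<and> ereal 1 \<le> hi j"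
      using H[rule_format, OF vertex_in[OF j] j] j by simp
    moreover have "lo j \<le> 0" if "m \<noteq> 1"
    proof -
      define j' where "j' = (if j = 1 then 2 else 1::nat)"
      have j': "j' \<in> {1..m}" "j' \<noteq> j" using that m j unfolding j'_def by auto
      show ?thesis using H[rule_format, OF vertex_in[OF j'(1)] j] j j' by simp
    qed
    ultimately show "lo j \<le> (if m = 1 then 1 else 0) \<and> 1 \<le> hi j" by (simp add: one_ereal_def)
  qed
next
  assume H: "\<forall>j\<in>{1..m}. lo j \<le> (if m = 1 then 1 else 0) \<and> 1 \<le> hi j"
  show "\<forall>w\<in>prob_simplex m. \<forall>j\<in>{1..m}. lo j \<le> w j \<and> ereal (w j) \<le> hi j"
  proof (intro ballI)
    fix w j assume w: "w \<in> prob_simplex m" and j: "j \<in> {1..m}"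
    have w01: "0 \<le> w j" "w j \<le> 1" using simplex_le1[OF w j] by auto
    have "lo j \<le> w j"
    proof (cases "m = 1")
      case True
      then have "j = 1" using j by auto
      have "(\<Sum>i=1..m. w i) = 1" using w unfolding prob_simplex_def by auto
      then have "w 1 = 1" using True by simp
      then show ?thesis using H j True \<open>j = 1\<close> by auto
    next
      case False
      then have "lo j \<le> 0" using H j by auto
      then show ?thesis using w01 by linarith
    qed
    moreover have "ereal (w j) \<le> hi j"
      using H j w01 by (metis ereal_less_eq(3) one_ereal_def order_trans)
    ultimately show "lo j \<le> w j \<and> ereal (w j) \<le> hi j" by simp
  qed
qed

lemma feasible_char:
  fixes lo :: "nat \<Rightarrow> real" and hi :: "nat \<Rightarrow> ereal"
  assumes m: "1 \<le> m" and lo0: "\<And>j. j \<in> {1..m} \<Longrightarrow> 0 \<le> lo j"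
  shows "(\<exists>w\<in>prob_simplex m. \<forall>j\<in>{1..m}. lo j \<le> w j \<and> ereal (w j) \<le> hi j) \<longleftrightarrow>
         ((\<forall>j\<in>{1..m}. ereal (lo j) \<le> hi j) \<and> (\<Sum>j=1..m. lo j) \<le> 1 \<and> 1 \<le> (\<Sum>j=1..m. hi j))"
proof
  assume "\<exists>w\<in>prob_simplex m. \<forall>j\<in>{1..m}. lo j \<le> w j \<and> ereal (w j) \<le> hi j"
  then obtain w where w: "w \<in> prob_simplex m" and H: "\<forall>j\<in>{1..m}. lo j \<le> w j \<and> ereal (w j) \<le> hi j" by blast
  have s: "(\<Sum>i=1..m. w i) = 1" using w unfolding prob_simplex_def by auto
  have "\<forall>j\<in>{1..m}. ereal (lo j) \<le> hi j" using H by (meson ereal_less_eq(3) order_trans)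
  moreover have "(\<Sum>j=1..m. lo j) \<le> 1" using H s sum_mono[of "{1..m}" lo w] by simp
  moreover have "1 \<le> (\<Sum>j=1..m. hi j)"
  proof -
    have "(\<Sum>j=1..m. ereal (w j)) \<le> (\<Sum>j=1..m. hi j)" using H by (intro sum_mono) auto
    then show ?thesis using s by (simp add: one_ereal_def)
  qed
  ultimately show "(\<forall>j\<in>{1..m}. ereal (lo j) \<le> hi j) \<and> (\<Sum>j=1..m. lo j) \<le> 1 \<and> 1 \<le> (\<Sum>j=1..m. hi j)" by blast
next
  assume H: "(\<forall>j\<in>{1..m}. ereal (lo j) \<le> hi j) \<and> (\<Sum>j=1..m. lo j) \<le> 1 \<and> 1 \<le> (\<Sum>j=1..m. hi j)"
  define L where "L = (\<Sum>j=1..m. lo j)"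
  have L1: "L \<le> 1" using H unfolding L_def by simp
  show "\<exists>w\<in>prob_simplex m. \<forall>j\<in>{1..m}. lo j \<le> w j \<and> ereal (w j) \<le> hi j"
  proof (cases "\<exists>j0\<in>{1..m}. hi j0 = \<infinity>")
    case True
    then obtain j0 where j0: "j0 \<in> {1..m}" "hi j0 = \<infinity>" by blast
    define w where "w = restrict (\<lambda>j. lo j + (if j = j0 then 1 - L else 0)) {1..m}"
    have "w \<in> prob_simplex m"
      unfolding prob_simplex_def
    proof (intro CollectI conjI ballI)
      show "w \<in> {1..m} \<rightarrow>\<^sub>E UNIV" unfolding w_def by auto
      fix i assume "i \<in> {1..m}" then show "0 \<le> w i" using lo0 L1 unfolding w_def by auto
    next
      have "(\<Sum>i=1..m. w i) = (\<Sum>i=1..m. lo i + (if i = j0 then 1 - L else 0))"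
        unfolding w_def by (intro sum.cong) auto
      also have "\<dots> = L + (1 - L)" unfolding L_def using j0 by (simp add: sum.distrib sum.delta)
      finally show "(\<Sum>i=1..m. w i) = 1" by simp
    qed
    moreover have "\<forall>j\<in>{1..m}. lo j \<le> w j \<and> ereal (w j) \<le> hi j"
    proof
      fix j assume j: "j \<in> {1..m}"
      show "lo j \<le> w j \<and> ereal (w j) \<le> hi j"
      proof (cases "j = j0")
        case True then show ?thesis using j j0 L1 unfolding w_def by auto
      next
        case False then show ?thesis using j H unfolding w_def by auto
      qed
    qed
    ultimately show ?thesis by blast
  next
    case False
    have fin: "\<And>j. j \<in> {1..m} \<Longrightarrow> hi j = ereal (real_of_ereal (hi j))"
    proof -
      fix j assume j: "j \<in> {1..m}"
      have "hi j \<noteq> \<infinity>" using False j by auto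
      moreover have "hi j \<noteq> -\<infinity>"
      proof
        assume "hi j = -\<infinity>"
        then have "ereal (lo j) \<le> -\<infinity>" using H j by metis
        then show False by simp
      qed
      ultimately show "hi j = ereal (real_of_ereal (hi j))" by (cases "hi j") auto
    qed
    define Hr where "Hr j = real_of_ereal (hi j)" for j
    have loH: "\<And>j. j \<in> {1..m} \<Longrightarrow> lo j \<le> Hr j" using H fin unfolding Hr_def by (metis ereal_less_eq(3))
    have "(\<Sum>j=1..m. hi j) = (\<Sum>j=1..m. ereal (Hr j))" using fin unfolding Hr_def by (intro sum.cong) auto
    also have "\<dots> = ereal (\<Sum>j=1..m. Hr j)" by simp
    finally have "1 \<le> (\<Sum>j=1..m. Hr j)" using H by (simp add: one_ereal_def)
    define S where "S = (\<Sum>j=1..m. Hr j)"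
    have S1: "1 \<le> S" using \<open>1 \<le> (\<Sum>j=1..m. Hr j)\<close> unfolding S_def .
    define lam where "lam = (1 - L) / (S - L)"
    have lam0: "0 \<le> lam" using L1 S1 unfolding lam_def by simp
    have lam1: "lam \<le> 1" using L1 S1 unfolding lam_def by (cases "S = L") (auto simp: divide_le_eq_1)
    define w where "w = restrict (\<lambda>j. lo j + lam * (Hr j - lo j)) {1..m}"
    have "w \<in> prob_simplex m"
      unfolding prob_simplex_def
    proof (intro CollectI conjI ballI)
      show "w \<in> {1..m} \<rightarrow>\<^sub>E UNIV" unfolding w_def by auto
      fix i assume i: "i \<in> {1..m}" then show "0 \<le> w i" using lo0[OF i] loH[OF i] lam0 unfolding w_def by auto
    next
      have "(\<Sum>i=1..m. w i) = (\<Sum>i=1..m. lo i + lam * (Hr i - lo i))"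
        unfolding w_def by (intro sum.cong) auto
      also have "\<dots> = L + lam * (S - L)" unfolding L_def S_def
        by (simp add: sum.distrib sum_distrib_left[symmetric] sum_subtractf)
      also have "\<dots> = 1"
      proof (cases "S = L")
        case True then show ?thesis using L1 S1 by simp
      next
        case False then show ?thesis unfolding lam_def by simp
      qed
      finally show "(\<Sum>i=1..m. w i) = 1" .
    qed
    moreover have "\<forall>j\<in>{1..m}. lo j \<le> w j \<and> ereal (w j) \<le> hi j"
    proof
      fix j assume j: "j \<in> {1..m}"
      have d: "0 \<le> Hr j - lo j" using loH[OF j] by simp
      have "lam * (Hr j - lo j) \<le> 1 * (Hr j - lo j)" using lam1 d by (intro mult_right_mono) auto
      then have "w j \<le> Hr j" using j unfolding w_def by simp
      moreover have "lo j \<le> w j" using j lam0 d unfolding w_def by simp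
      ultimately show "lo j \<le> w j \<and> ereal (w j) \<le> hi j" using fin[OF j] unfolding Hr_def by (metis ereal_less_eq(3))
    qed
    ultimately show ?thesis by blast
  qed
qed



definition LO :: "real \<Rightarrow> real \<Rightarrow> real \<Rightarrow> real" where
  "LO t x y = (if 0 \<le> y \<and> x \<le> 0 then 0 else if 0 < y \<and> 0 < x then 0
     else if y < 0 \<and> x < 0 then t*y/((1 - t)*x) else 1)"
definition HI :: "real \<Rightarrow> real \<Rightarrow> real \<Rightarrow> ereal" where
  "HI t x y = (if 0 \<le> y \<and> x \<le> 0 then \<infinity> else if 0 < y \<and> 0 < x then ereal (t*y/((1 - t)*x))
     else if y < 0 \<and> x < 0 then \<infinity> else 0)"

lemma allowed:
  assumes t: "0<t" "t<1" and v: "0 \<le> v"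
  shows "(ereal x / ereal t \<le> ereal y / ereal ((1 - t)* v)) \<longleftrightarrow> (LO t x y \<le> v \<and> ereal v \<le> HI t x y)"
proof (cases "v = 0")
  case True
  have xt: "ereal x / ereal t = ereal (x/t)" using t by simp
  show ?thesis
  proof (cases "y > 0")
    case True
    then show ?thesis using \<open>v=0\<close> t unfolding LO_def HI_def by auto
  next
    case False
    then consider "y = 0" | "y < 0" by linarith
    then show ?thesis
    proof cases
      case 1
      then show ?thesis using \<open>v=0\<close> t unfolding LO_def HI_def
        by (auto simp: divide_nonpos_pos zero_ereal_def[symmetric] divide_le_0_iff)
    next
      case 2
      have "ereal y * \<infinity> = -\<infinity>" using 2 by (simp add: ereal_mult_infty)
      have "x < 0 \<Longrightarrow> t * y / ((1 - t) * x) > 0" using 2 t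
        by (intro divide_neg_neg) (auto simp: mult_pos_neg mult_neg_pos)
      then show ?thesis using \<open>v=0\<close> t 2 unfolding LO_def HI_def
        by (auto simp: not_le[symmetric])
    qed
  qed
next
  case False
  then have vp: "v > 0" using v by simp
  have "(ereal x / ereal t \<le> ereal y / ereal ((1 - t)* v)) \<longleftrightarrow> x/t \<le> y/((1 - t)* v)"
    using t vp by simp
  also have "\<dots> \<longleftrightarrow> (1 - t)* v *x \<le> t*y"
    using t vp by (simp add: divide_le_eq le_divide_eq field_simps)
  also have "\<dots> \<longleftrightarrow> (LO t x y \<le> v \<and> ereal v \<le> HI t x y)"
  proof -
    consider "0 \<le> y \<and> x \<le> 0" | "0 < y \<and> 0 < x" | "y < 0 \<and> x < 0" | "y = 0 \<and> 0 < x" | "y < 0 \<and> 0 \<le> x"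
      by linarith
    then show ?thesis
    proof cases
      case 1
      have "(1 - t)* v *x \<le> 0" using 1 t vp by (simp add: mult_nonneg_nonpos)
      moreover have "0 \<le> t * y" using 1 t by simp
      ultimately have "(1 - t) * v * x \<le> t * y" by linarith
      then show ?thesis using 1 vp t unfolding LO_def HI_def by auto
    next
      case 2
      then show ?thesis using vp t unfolding LO_def HI_def
        by (auto simp: pos_le_divide_eq mult_ac)
    next
      case 3
      have "(1 - t)*x < 0" using 3 t by (simp add: mult_pos_neg)
      then show ?thesis using 3 vp t unfolding LO_def HI_def
        by (auto simp: neg_divide_le_eq mult_ac)
    next
      case 4
      have "(1 - t)* v *x > 0" using 4 t vp by simp
      then have "\<not> (1 - t) * v * x \<le> t * y" using 4 by simp
      then show ?thesis using 4 vp t unfolding LO_def HI_def by auto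
    next
      case 5
      have "(1 - t)* v *x \<ge> 0" using 5 t vp by simp
      moreover have "t*y < 0" using 5 t by (simp add: mult_pos_neg)
      ultimately have "\<not> (1 - t) * v * x \<le> t * y" by linarith
      then show ?thesis using 5 vp t unfolding LO_def HI_def by auto
    qed
  qed
  finally show ?thesis .
qed

lemma sum_shift1:
  fixes f :: "nat \<Rightarrow> 'a::comm_monoid_add"
  assumes "1 \<le> K"
  shows "(\<Sum>i=2..K. f i) = (\<Sum>j=1..K - 1. f (j + 1))"
proof -
  have e: "K - 1 + 1 = K" using assms by simp
  have "(\<Sum>i=2..K. f i) = (\<Sum>i=1+1..(K - 1)+1. f i)" unfolding e one_add_one ..
  also have "\<dots> = (\<Sum>j=1..K - 1. f (j + 1))" by (rule sum.shift_bounds_cl_nat_ivl)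
  finally show ?thesis .
qed

lemma sum_split1:
  fixes f :: "nat \<Rightarrow> 'a::comm_monoid_add"
  assumes "1 \<le> K"
  shows "(\<Sum>i=1..K. f i) = f 1 + (\<Sum>i=2..K. f i)"
  using sum.atLeast_Suc_atMost[OF assms, of f] by (simp only: Suc_1)

definition CC :: "real \<Rightarrow> (nat \<Rightarrow> real) \<Rightarrow> nat \<Rightarrow> real \<Rightarrow> bool" where
  "CC t Z j v \<longleftrightarrow> LO t (Z 1) (Z (j + 1)) \<le> v \<and> ereal v \<le> HI t (Z 1) (Z (j + 1))"

lemma cond_focal_char:
  assumes K: "2 \<le> K" and t: "0 < t" "t < 1"
  shows "cond_focal K t Z = {w \<in> prob_simplex (K - 1). \<forall>j\<in>{1..K - 1}. CC t Z j (w j)}"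
proof
  show "cond_focal K t Z \<subseteq> {w \<in> prob_simplex (K - 1). \<forall>j\<in>{1..K - 1}. CC t Z j (w j)}"
  proof
    fix w assume "w \<in> cond_focal K t Z"
    then obtain \<theta> where th: "\<theta> \<in> focal K Z" "\<theta> 1 = t"
      and w: "w = restrict (\<lambda>j. \<theta> (j + 1) / (1 - t)) {1..K - 1}"
      unfolding cond_focal_def by auto
    have thS: "\<theta> \<in> prob_simplex K" and thC: "\<forall>j\<in>{2..K}. ereal (Z 1) / ereal (\<theta> 1) \<le> ereal (Z j) / ereal (\<theta> j)"
      using th(1) unfolding focal_def by blast+
    have nn: "\<And>i. i \<in> {1..K} \<Longrightarrow> 0 \<le> \<theta> i" and s1: "(\<Sum>i=1..K. \<theta> i) = 1"
      using thS unfolding prob_simplex_def by auto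
    have "(\<Sum>i=2..K. \<theta> i) = 1 - t" using s1 sum_split1[of K \<theta>] K th(2) by simp
    then have s2: "(\<Sum>j=1..K - 1. \<theta> (j + 1)) = 1 - t" using sum_shift1[of K \<theta>] K by simp
    have "w \<in> prob_simplex (K - 1)"
      unfolding prob_simplex_def
    proof (intro CollectI conjI ballI)
      show "w \<in> {1..K - 1} \<rightarrow>\<^sub>E UNIV" using w by auto
      fix i assume "i \<in> {1..K - 1}"
      then show "0 \<le> w i" using w nn[of "i+1"] t by auto
    next
      have "(\<Sum>i=1..K - 1. w i) = (\<Sum>i=1..K - 1. \<theta> (i + 1) / (1 - t))" using w by simp
      also have "\<dots> = (\<Sum>i=1..K - 1. \<theta> (i + 1)) / (1 - t)" by (simp add: sum_divide_distrib)
      finally show "(\<Sum>i=1..K - 1. w i) = 1" using s2 t by simp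
    qed
    moreover have "CC t Z j (w j)" if j: "j \<in> {1..K - 1}" for j
    proof -
      have wj: "w j = \<theta> (j + 1) / (1 - t)" using w j by simp
      have "0 \<le> \<theta> (j + 1)" using nn[of "j+1"] j by auto
      then have "0 \<le> w j" using wj t by simp
      have "\<theta> (j + 1) = (1 - t) * w j" using wj t by simp
      moreover have "ereal (Z 1) / ereal t \<le> ereal (Z (j+1)) / ereal (\<theta> (j+1))"
      proof -
        have "j+1 \<in> {2..K}" using j by auto
        then show ?thesis unfolding th(2)[symmetric] using thC by blast
      qed
      ultimately show ?thesis using allowed[OF t \<open>0 \<le> w j\<close>] unfolding CC_def by simp
    qed
    ultimately show "w \<in> {w \<in> prob_simplex (K - 1). \<forall>j\<in>{1..K - 1}. CC t Z j (w j)}" by auto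
  qed
next
  show "{w \<in> prob_simplex (K - 1). \<forall>j\<in>{1..K - 1}. CC t Z j (w j)} \<subseteq> cond_focal K t Z"
  proof
    fix w assume "w \<in> {w \<in> prob_simplex (K - 1). \<forall>j\<in>{1..K - 1}. CC t Z j (w j)}"
    then have wS: "w \<in> prob_simplex (K - 1)" and wC: "\<And>j. j \<in> {1..K - 1} \<Longrightarrow> CC t Z j (w j)" by auto
    have wE: "w \<in> {1..K - 1} \<rightarrow>\<^sub>E UNIV" and wn: "\<And>i. i \<in> {1..K - 1} \<Longrightarrow> 0 \<le> w i"
      and ws: "(\<Sum>i=1..K - 1. w i) = 1"
      using wS unfolding prob_simplex_def by auto
    define \<theta> where "\<theta> = restrict (\<lambda>i. if i = 1 then t else (1 - t) * w (i - 1)) {1..K}"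
    have th1: "\<theta> 1 = t" using K unfolding \<theta>_def by simp
    have thj: "\<theta> (j + 1) = (1 - t) * w j" if "j \<in> {1..K - 1}" for j
      using that unfolding \<theta>_def by auto
    have "(\<Sum>i=2..K. \<theta> i) = (\<Sum>j=1..K - 1. \<theta> (j + 1))" using sum_shift1[of K \<theta>] K by simp
    also have "\<dots> = (\<Sum>j=1..K - 1. (1 - t) * w j)" using thj by (intro sum.cong) auto
    also have "\<dots> = 1 - t" using ws by (simp add: sum_distrib_left[symmetric])
    finally have s2: "(\<Sum>i=2..K. \<theta> i) = 1 - t" .
    have thS: "\<theta> \<in> prob_simplex K"
      unfolding prob_simplex_def
    proof (intro CollectI conjI ballI)
      show "\<theta> \<in> {1..K} \<rightarrow>\<^sub>E UNIV" unfolding \<theta>_def by auto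
      fix i assume i: "i \<in> {1..K}"
      show "0 \<le> \<theta> i"
      proof (cases "i = 1")
        case True then show ?thesis using th1 t by simp
      next
        case False
        then have "i - 1 \<in> {1..K - 1}" using i by auto
        then show ?thesis using False i t wn unfolding \<theta>_def by auto
      qed
    next
      show "(\<Sum>i=1..K. \<theta> i) = 1" using sum_split1[of K \<theta>] K s2 th1 by simp
    qed
    have "\<forall>j\<in>{2..K}. ereal (Z 1) / ereal (\<theta> 1) \<le> ereal (Z j) / ereal (\<theta> j)"
    proof
      fix i assume i: "i \<in> {2..K}"
      define j where "j = i - 1"
      have j: "j \<in> {1..K - 1}" "i = j + 1" using i unfolding j_def by auto
      have "0 \<le> w j" using wn j by auto
      then show "ereal (Z 1) / ereal (\<theta> 1) \<le> ereal (Z i) / ereal (\<theta> i)"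
        using allowed[OF t \<open>0 \<le> w j\<close>, of "Z 1" "Z (j+1)"] wC[OF j(1)] th1 thj[OF j(1)] j(2)
        unfolding CC_def by simp
    qed
    then have "\<theta> \<in> focal K Z \<inter> {\<theta>. \<theta> 1 = t}" using thS th1 unfolding focal_def by auto
    moreover have "w = restrict (\<lambda>j. \<theta> (j + 1) / (1 - t)) {1..K - 1}"
    proof
      fix j show "w j = restrict (\<lambda>j. \<theta> (j + 1) / (1 - t)) {1..K - 1} j"
        using wE thj[of j] t by (cases "j \<in> {1..K - 1}") (auto simp: PiE_def extensional_def)
    qed
    ultimately show "w \<in> cond_focal K t Z" unfolding cond_focal_def by blast
  qed
qed



lemma LO_nonneg: "0 < t \<Longrightarrow> t < 1 \<Longrightarrow> 0 \<le> LO t x y"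
  unfolding LO_def by (auto intro!: divide_nonpos_neg simp: mult_pos_neg mult_nonneg_nonpos)

lemma Zcoord: "i \<in> {1..K} \<Longrightarrow> (\<lambda>Z. Z i) \<in> borel_measurable (Zmeasure K)"
  unfolding Zmeasure_def by measurable

lemma Zcoord1: "2 \<le> K \<Longrightarrow> (\<lambda>Z. Z 1) \<in> borel_measurable (Zmeasure K)"
  by (rule Zcoord) auto

lemma Zcoordj: "2 \<le> K \<Longrightarrow> j \<in> {1..K - 1} \<Longrightarrow> (\<lambda>Z. Z (j + 1)) \<in> borel_measurable (Zmeasure K)"
  by (rule Zcoord) auto

lemma LO_meas:
  assumes [measurable]: "f \<in> borel_measurable M" "g \<in> borel_measurable M"
  shows "(\<lambda>x. LO t (f x) (g x)) \<in> borel_measurable M"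
  unfolding LO_def by measurable

lemma HI_meas:
  assumes [measurable]: "f \<in> borel_measurable M" "g \<in> borel_measurable M"
  shows "(\<lambda>x. HI t (f x) (g x)) \<in> borel_measurable M"
  unfolding HI_def by measurable

lemma LOj: "2 \<le> K \<Longrightarrow> j \<in> {1..K - 1} \<Longrightarrow> (\<lambda>Z. LO t (Z 1) (Z (j + 1))) \<in> borel_measurable (Zmeasure K)"
  by (intro LO_meas Zcoordj Zcoord1) 

lemma HIj: "2 \<le> K \<Longrightarrow> j \<in> {1..K - 1} \<Longrightarrow> (\<lambda>Z. HI t (Z 1) (Z (j + 1))) \<in> borel_measurable (Zmeasure K)"
  by (intro HI_meas Zcoordj Zcoord1)

lemma full_event:
  assumes K: "2 \<le> K" and t: "0 < t" "t < 1"
  shows "(cond_focal K t Z = prob_simplex (K - 1)) \<longleftrightarrow>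
    (\<forall>j\<in>{1..K - 1}. LO t (Z 1) (Z (j + 1)) \<le> (if K - 1 = 1 then 1 else 0) \<and> 1 \<le> HI t (Z 1) (Z (j + 1)))"
proof -
  have "(cond_focal K t Z = prob_simplex (K - 1)) \<longleftrightarrow> (\<forall>w\<in>prob_simplex (K - 1). \<forall>j\<in>{1..K - 1}. CC t Z j (w j))"
    unfolding cond_focal_char[OF K t] by blast
  also have "\<dots> \<longleftrightarrow> (\<forall>j\<in>{1..K - 1}. LO t (Z 1) (Z (j + 1)) \<le> (if K - 1 = 1 then 1 else 0) \<and> 1 \<le> HI t (Z 1) (Z (j + 1)))"
    unfolding CC_def by (rule full_char) (use K in simp)
  finally show ?thesis .
qed

lemma ne_event:
  assumes K: "2 \<le> K" and t: "0 < t" "t < 1"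
  shows "(cond_focal K t Z \<noteq> {}) \<longleftrightarrow>
    ((\<forall>j\<in>{1..K - 1}. ereal (LO t (Z 1) (Z (j + 1))) \<le> HI t (Z 1) (Z (j + 1))) \<and>
     (\<Sum>j=1..K - 1. LO t (Z 1) (Z (j + 1))) \<le> 1 \<and> 1 \<le> (\<Sum>j=1..K - 1. HI t (Z 1) (Z (j + 1))))"
proof -
  have "(cond_focal K t Z \<noteq> {}) \<longleftrightarrow> (\<exists>w\<in>prob_simplex (K - 1). \<forall>j\<in>{1..K - 1}. CC t Z j (w j))"
    unfolding cond_focal_char[OF K t] by blast
  also have "\<dots> \<longleftrightarrow> ((\<forall>j\<in>{1..K - 1}. ereal (LO t (Z 1) (Z (j + 1))) \<le> HI t (Z 1) (Z (j + 1))) \<and>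
     (\<Sum>j=1..K - 1. LO t (Z 1) (Z (j + 1))) \<le> 1 \<and> 1 \<le> (\<Sum>j=1..K - 1. HI t (Z 1) (Z (j + 1))))"
    unfolding CC_def by (rule feasible_char) (use K t LO_nonneg in auto)
  finally show ?thesis .
qed

lemma full_meas:
  assumes K: "2 \<le> K" and t: "0 < t" "t < 1"
  shows "{Z \<in> space (Zmeasure K). cond_focal K t Z = prob_simplex (K - 1)} \<in> sets (Zmeasure K)"
proof -
  have "Measurable.pred (Zmeasure K) (\<lambda>Z. \<forall>j\<in>{1..K - 1}. LO t (Z 1) (Z (j + 1)) \<le> (if K - 1 = 1 then 1 else 0) \<and> 1 \<le> HI t (Z 1) (Z (j + 1)))"
  proof (rule pred_intros_finite(3))
    fix j assume j: "j \<in> {1..K - 1}"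
    note [measurable] = LOj[OF K j] HIj[OF K j]
    show "Measurable.pred (Zmeasure K) (\<lambda>Z. LO t (Z 1) (Z (j + 1)) \<le> (if K - 1 = 1 then 1 else 0) \<and> 1 \<le> HI t (Z 1) (Z (j + 1)))"
      by measurable
  qed simp
  then show ?thesis unfolding Measurable.pred_def full_event[OF K t] .
qed

lemma ne_meas:
  assumes K: "2 \<le> K" and t: "0 < t" "t < 1"
  shows "{Z \<in> space (Zmeasure K). cond_focal K t Z \<noteq> {}} \<in> sets (Zmeasure K)"
proof -
  have p1: "Measurable.pred (Zmeasure K) (\<lambda>Z. \<forall>j\<in>{1..K - 1}. ereal (LO t (Z 1) (Z (j + 1))) \<le> HI t (Z 1) (Z (j + 1)))"
  proof (rule pred_intros_finite(3))
    fix j assume j: "j \<in> {1..K - 1}"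
    note [measurable] = borel_measurable_ereal[OF LOj[OF K j]] HIj[OF K j]
    show "Measurable.pred (Zmeasure K) (\<lambda>Z. ereal (LO t (Z 1) (Z (j + 1))) \<le> HI t (Z 1) (Z (j + 1)))"
      unfolding Measurable.pred_def by (rule borel_measurable_le) (rule borel_measurable_ereal[OF LOj[OF K j]], rule HIj[OF K j])
  qed simp
  have [measurable]: "(\<lambda>Z. \<Sum>j=1..K - 1. LO t (Z 1) (Z (j + 1))) \<in> borel_measurable (Zmeasure K)"
    by (rule borel_measurable_sum) (rule LOj[OF K])
  have [measurable]: "(\<lambda>Z. \<Sum>j=1..K - 1. HI t (Z 1) (Z (j + 1))) \<in> borel_measurable (Zmeasure K)"
    by (rule borel_measurable_ereal_sum) (rule HIj[OF K])
  note [measurable] = p1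
  have "Measurable.pred (Zmeasure K) (\<lambda>Z. (\<forall>j\<in>{1..K - 1}. ereal (LO t (Z 1) (Z (j + 1))) \<le> HI t (Z 1) (Z (j + 1))) \<and>
     (\<Sum>j=1..K - 1. LO t (Z 1) (Z (j + 1))) \<le> 1 \<and> 1 \<le> (\<Sum>j=1..K - 1. HI t (Z 1) (Z (j + 1))))"
    by measurable
  then show ?thesis unfolding Measurable.pred_def ne_event[OF K t] .
qed



abbreviation "E1 \<equiv> density lborel (exponential_density 1)"

lemma L_exp:
  fixes c b :: real
  assumes c: "0 \<le> c" and b: "0 \<le> b"
  shows "(\<integral>\<^sup>+x. ennreal (exponential_density 1 x * exp (- c * x)) * indicator {b..} x \<partial>lborel)
       = ennreal (exp (- (1 + c) * b) / (1 + c))"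
proof -
  have "(\<integral>\<^sup>+x. ennreal (exponential_density 1 x * exp (- c * x)) * indicator {b..} x \<partial>lborel)
      = ennreal (0 - (- exp (- (1 + c) * b) / (1 + c)))"
  proof (rule nn_integral_FTC_atLeast)
    show "(\<lambda>x. exponential_density 1 x * exp (- c * x)) \<in> borel_measurable borel"
      unfolding exponential_density_def by measurable
    fix x :: real assume x: "b \<le> x"
    then have x0: "\<not> x < 0" using b by simp
    have "((\<lambda>x. - exp (- (1 + c) * x) / (1 + c)) has_real_derivative
        (- (exp (- (1 + c) * x) * (- (1 + c))) / (1 + c))) (at x)"
      using c by (auto intro!: derivative_eq_intros)
    moreover have "(- (exp (- (1 + c) * x) * (- (1 + c))) / (1 + c)) = exponential_density 1 x * exp (- c * x)"
    proof -
      have "1 + c \<noteq> 0" using c by simp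
      then have "(- (exp (- (1 + c) * x) * (- (1 + c))) / (1 + c)) = exp (- (1 + c) * x)"
        by (simp add: field_simps)
      also have "\<dots> = exp (- x * 1) * exp (- c * x)" by (simp add: exp_add[symmetric] algebra_simps)
      finally show ?thesis using x0 by (simp add: exponential_density_def)
    qed
    ultimately show "((\<lambda>x. - exp (- (1 + c) * x) / (1 + c)) has_real_derivative exponential_density 1 x * exp (- c * x)) (at x)"
      by simp
    show "0 \<le> exponential_density 1 x * exp (- c * x)"
      by (simp add: exponential_density_def)
  next
    have "((\<lambda>x::real. - exp (- (1 + c) * x) / (1 + c)) \<longlongrightarrow> - 0 / (1 + c)) at_top"
      using c by (intro tendsto_intros filterlim_compose[OF exp_at_bot] filterlim_tendsto_neg_mult_at_bot[OF tendsto_const] filterlim_ident) auto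
    then show "((\<lambda>x::real. - exp (- (1 + c) * x) / (1 + c)) \<longlongrightarrow> 0) at_top" by simp
  qed
  then show ?thesis by simp
qed

lemma ed_meas[measurable]: "(\<lambda>x. ennreal (exponential_density 1 x)) \<in> borel_measurable borel"
  unfolding exponential_density_def by measurable

lemma I1:
  assumes c: "0 \<le> c"
  shows "(\<integral>\<^sup>+y. ennreal (exp (- c * max 0 y)) \<partial>E1) = ennreal (1 / (1 + c))"
proof -
  have "(\<integral>\<^sup>+y. ennreal (exp (- c * max 0 y)) \<partial>E1) =
        (\<integral>\<^sup>+y. ennreal (exponential_density 1 y) * ennreal (exp (- c * max 0 y)) \<partial>lborel)"
    by (rule nn_integral_density) auto
  also have "\<dots> = (\<integral>\<^sup>+y. ennreal (exponential_density 1 y * exp (- c * y)) * indicator {0..} y \<partial>lborel)"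
    by (intro nn_integral_cong) (auto simp: exponential_density_def ennreal_mult[symmetric] indicator_def)
  also have "\<dots> = ennreal (exp (- (1 + c) * 0) / (1 + c))" by (rule L_exp[OF c]) simp
  finally show ?thesis by simp
qed

lemma I2a:
  assumes b: "0 \<le> b"
  shows "emeasure E1 {b..} = ennreal (exp (- b))"
proof -
  have "emeasure E1 {b..} = (\<integral>\<^sup>+x. ennreal (exponential_density 1 x) * indicator {b..} x \<partial>lborel)"
    by (rule emeasure_density) auto
  also have "\<dots> = (\<integral>\<^sup>+x. ennreal (exponential_density 1 x * exp (- 0 * x)) * indicator {b..} x \<partial>lborel)"
    by simp
  also have "\<dots> = ennreal (exp (- (1 + 0) * b) / (1 + 0))" by (rule L_exp) (use b in auto)
  finally show ?thesis by simp
qed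

lemma I2b:
  assumes b: "0 \<le> b"
  shows "emeasure E1 {b<..} = ennreal (exp (- b))"
proof -
  have "emeasure E1 {b<..} = (\<integral>\<^sup>+x. ennreal (exponential_density 1 x) * indicator {b<..} x \<partial>lborel)"
    by (rule emeasure_density) auto
  also have "\<dots> = (\<integral>\<^sup>+x. ennreal (exponential_density 1 x) * indicator {b..} x \<partial>lborel)"
    by (intro nn_integral_cong_AE) (use AE_lborel_singleton[of b] in \<open>auto elim!: eventually_mono simp: indicator_def\<close>)
  also have "\<dots> = emeasure E1 {b..}"
    by (rule emeasure_density[symmetric]) auto
  finally show ?thesis using I2a[OF b] by simp
qed

lemma AE_E1_pos: "AE x in E1. 0 < x"
proof -
  have "AE x in lborel. 0 < ennreal (exponential_density 1 x) \<longrightarrow> 0 < x"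
    using AE_lborel_singleton[of 0] by eventually_elim (auto simp: exponential_density_def)
  then show ?thesis by (subst AE_density) auto
qed

lemma prob_E1: "prob_space E1" by (rule prob_space_exponential_density) simp

interpretation PS: product_sigma_finite "\<lambda>_::nat. E1"
  unfolding product_sigma_finite_def
  using prob_E1 prob_space_imp_sigma_finite by blast

lemma Zmeasure_insert: "2 \<le> K \<Longrightarrow> Zmeasure K = PiM (insert 1 {2..K}) (\<lambda>_. E1)"
  unfolding Zmeasure_def by (metis Suc_1 Suc_le_D atLeastAtMost_insertL one_le_numeral order.trans)

lemma upd_space:
  assumes "x \<in> space (PiM {2..K} (\<lambda>_::nat. E1))" "2 \<le> K"
  shows "x(1 := y) \<in> space (Zmeasure K)"
  using assms unfolding Zmeasure_def by (auto simp: space_PiM PiE_def extensional_def)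

lemma F_emeasure:
  assumes K: "2 \<le> K" and t: "0 < t" "t < 1"
  shows "emeasure (Zmeasure K) {Z \<in> space (Zmeasure K). \<forall>j\<in>{2..K}. (1 - t) * Z 1 \<le> t * Z j}
     = ennreal (1 / (1 + real (K - 1) * (1 - t) / t))"
proof -
  define F where "F = {Z \<in> space (Zmeasure K). \<forall>j\<in>{2..K}. (1 - t) * Z 1 \<le> t * Z j}"
  define c where "c = real (K - 1) * (1 - t) / t"
  have c0: "0 \<le> c" using t unfolding c_def by simp
  have Fs: "F \<in> sets (Zmeasure K)"
  proof -
    have "Measurable.pred (Zmeasure K) (\<lambda>Z. \<forall>j\<in>{2..K}. (1 - t) * Z 1 \<le> t * Z j)"
    proof (rule pred_intros_finite(3))
      fix j assume j: "j \<in> {2..K}"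
      have a: "(\<lambda>Z. Z j) \<in> borel_measurable (Zmeasure K)" using j by (intro Zcoord) auto
      have b: "(\<lambda>Z. Z 1) \<in> borel_measurable (Zmeasure K)" using K by (rule Zcoord1)
      show "Measurable.pred (Zmeasure K) (\<lambda>Z. (1 - t) * Z 1 \<le> t * Z j)"
        unfolding Measurable.pred_def
        by (rule borel_measurable_le) (intro borel_measurable_times borel_measurable_const a b)+
    qed simp
    then show ?thesis unfolding F_def Measurable.pred_def .
  qed
  have "emeasure (Zmeasure K) F = (\<integral>\<^sup>+Z. indicator F Z \<partial>Zmeasure K)"
    using Fs by simp
  also have "\<dots> = (\<integral>\<^sup>+y. (\<integral>\<^sup>+x. indicator F (x(1 := y)) \<partial>PiM {2..K} (\<lambda>_. E1)) \<partial>E1)"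
    unfolding Zmeasure_insert[OF K] 
    by (rule PS.product_nn_integral_insert_rev) (use Fs Zmeasure_insert[OF K] in auto)
  also have "\<dots> = (\<integral>\<^sup>+y. ennreal (exp (- c * max 0 y)) \<partial>E1)"
  proof (rule nn_integral_cong_AE)
    show "AE y in E1. (\<integral>\<^sup>+x. indicator F (x(1 := y)) \<partial>PiM {2..K} (\<lambda>_. E1)) = ennreal (exp (- c * max 0 y))"
      using AE_E1_pos
    proof eventually_elim
      fix y :: real assume y: "0 < y"
      have "(\<integral>\<^sup>+x. indicator F (x(1 := y)) \<partial>PiM {2..K} (\<lambda>_. E1))
          = (\<integral>\<^sup>+x. (\<Prod>j\<in>{2..K}. indicator {(1 - t) * y / t..} (x j)) \<partial>PiM {2..K} (\<lambda>_. E1))"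
      proof (rule nn_integral_cong)
        fix x assume x: "x \<in> space (PiM {2..K} (\<lambda>_. E1))"
        have xs: "x(1 := y) \<in> space (Zmeasure K)" by (rule upd_space[OF x K])
        have iff: "(1 - t) * y \<le> t * u \<longleftrightarrow> (1 - t) * y / t \<le> u" for u
          using t by (simp add: divide_le_eq mult.commute)
        show "indicator F (x(1 := y)) = (\<Prod>j\<in>{2..K}. indicator {(1 - t) * y / t..} (x j) :: ennreal)"
        proof (cases "\<forall>j\<in>{2..K}. (1 - t) * y / t \<le> x j")
          case True
          then have "x(1 := y) \<in> F" using xs iff unfolding F_def by auto
          then show ?thesis using True by (simp add: indicator_def)
        next
          case False
          then obtain j where j: "j \<in> {2..K}" "\<not> (1 - t) * y / t \<le> x j" by blast
          then have "x(1 := y) \<notin> F" using iff unfolding F_def by auto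
          moreover have "(\<Prod>j\<in>{2..K}. indicator {(1 - t) * y / t..} (x j) :: ennreal) = 0"
            using j by (intro prod_zero) (auto simp: indicator_def intro!: bexI[of _ j])
          ultimately show ?thesis by simp
        qed
      qed
      also have "\<dots> = (\<Prod>j\<in>{2..K}. \<integral>\<^sup>+u. indicator {(1 - t) * y / t..} u \<partial>E1)"
        by (rule PS.product_nn_integral_prod) auto
      also have "\<dots> = (\<Prod>j\<in>{2..K}. ennreal (exp (- ((1 - t) * y / t))))"
        using I2a[of "(1 - t) * y / t"] y t by (intro prod.cong) auto
      also have "\<dots> = ennreal (exp (- ((1 - t) * y / t)) ^ (K - 1))"
        using K by (simp add: ennreal_power)
      also have "exp (- ((1 - t) * y / t)) ^ (K - 1) = exp (- c * max 0 y)"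
        using y unfolding c_def by (simp add: exp_of_nat_mult[symmetric])
      finally show "(\<integral>\<^sup>+x. indicator F (x(1 := y)) \<partial>PiM {2..K} (\<lambda>_. E1)) = ennreal (exp (- c * max 0 y))" .
    qed
  qed
  also have "\<dots> = ennreal (1 / (1 + c))" by (rule I1[OF c0])
  finally show ?thesis unfolding F_def c_def .
qed

lemma sum_max_meas:
  assumes K: "2 \<le> K"
  shows "(\<lambda>Z. \<Sum>j\<in>{2..K}. max 0 (Z j)) \<in> borel_measurable (Zmeasure K)"
proof (rule borel_measurable_sum)
  fix j assume j: "j \<in> {2..K}"
  have a: "(\<lambda>Z. Z j) \<in> borel_measurable (Zmeasure K)" using j by (intro Zcoord) auto
  show "(\<lambda>Z. max 0 (Z j)) \<in> borel_measurable (Zmeasure K)"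
    by (intro borel_measurable_max borel_measurable_const a)
qed

lemma C_emeasure:
  assumes K: "2 \<le> K" and t: "0 < t" "t < 1"
  shows "emeasure (Zmeasure K) {Z \<in> space (Zmeasure K). t * (\<Sum>j\<in>{2..K}. max 0 (Z j)) < (1 - t) * Z 1}
     = ennreal ((1 / (1 + t / (1 - t))) ^ (K - 1))"
proof -
  define C where "C = {Z \<in> space (Zmeasure K). t * (\<Sum>j\<in>{2..K}. max 0 (Z j)) < (1 - t) * Z 1}"
  define c where "c = t / (1 - t)"
  have c0: "0 \<le> c" using t unfolding c_def by simp
  have Cs: "C \<in> sets (Zmeasure K)"
  proof -
    have b: "(\<lambda>Z. Z 1) \<in> borel_measurable (Zmeasure K)" using K by (rule Zcoord1)
    have "Measurable.pred (Zmeasure K) (\<lambda>Z. t * (\<Sum>j\<in>{2..K}. max 0 (Z j)) < (1 - t) * Z 1)"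
      unfolding Measurable.pred_def
      by (rule borel_measurable_less) (intro borel_measurable_times borel_measurable_const b sum_max_meas[OF K])+
    then show ?thesis unfolding C_def Measurable.pred_def .
  qed
  have "emeasure (Zmeasure K) C = (\<integral>\<^sup>+Z. indicator C Z \<partial>Zmeasure K)"
    using Cs by simp
  also have "\<dots> = (\<integral>\<^sup>+x. (\<integral>\<^sup>+y. indicator C (x(1 := y)) \<partial>E1) \<partial>PiM {2..K} (\<lambda>_. E1))"
    unfolding Zmeasure_insert[OF K] 
    by (rule PS.product_nn_integral_insert) (use Cs Zmeasure_insert[OF K] in auto)
  also have "\<dots> = (\<integral>\<^sup>+x. (\<Prod>j\<in>{2..K}. ennreal (exp (- c * max 0 (x j)))) \<partial>PiM {2..K} (\<lambda>_. E1))"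
  proof (rule nn_integral_cong)
    fix x assume x: "x \<in> space (PiM {2..K} (\<lambda>_. E1))"
    define m where "m = t * (\<Sum>j\<in>{2..K}. max 0 (x j)) / (1 - t)"
    have "0 \<le> (\<Sum>j\<in>{2..K}. max 0 (x j))" by (intro sum_nonneg) auto
    then have m0: "0 \<le> m" using t unfolding m_def by simp
    have "(\<integral>\<^sup>+y. indicator C (x(1 := y)) \<partial>E1) = (\<integral>\<^sup>+y. indicator {m<..} y \<partial>E1)"
    proof (rule nn_integral_cong)
      fix y
      have xs: "x(1 := y) \<in> space (Zmeasure K)" by (rule upd_space[OF x K])
      have su: "(\<Sum>j\<in>{2..K}. max 0 ((x(1 := y)) j)) = (\<Sum>j\<in>{2..K}. max 0 (x j))"
        by (intro sum.cong) auto
      have "x(1 := y) \<in> C \<longleftrightarrow> m < y"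
        using xs t unfolding C_def m_def su by (simp add: divide_less_eq mult.commute)
      then show "indicator C (x(1 := y)) = (indicator {m<..} y :: ennreal)" by (simp add: indicator_def)
    qed
    also have "\<dots> = ennreal (exp (- m))" using I2b[OF m0] by simp
    also have "exp (- m) = (\<Prod>j\<in>{2..K}. exp (- c * max 0 (x j)))"
    proof -
      have "- m = (\<Sum>j\<in>{2..K}. - c * max 0 (x j))"
        unfolding m_def c_def by (simp add: sum_distrib_left[symmetric] sum_negf sum_divide_distrib[symmetric])
      then show ?thesis by (simp add: exp_sum)
    qed
    also have "ennreal (\<Prod>j\<in>{2..K}. exp (- c * max 0 (x j))) = (\<Prod>j\<in>{2..K}. ennreal (exp (- c * max 0 (x j))))"
      by (rule prod_ennreal[symmetric]) simp
    finally show "(\<integral>\<^sup>+y. indicator C (x(1 := y)) \<partial>E1) = (\<Prod>j\<in>{2..K}. ennreal (exp (- c * max 0 (x j))))" .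
  qed
  also have "\<dots> = (\<Prod>j\<in>{2..K}. (\<integral>\<^sup>+u. ennreal (exp (- c * max 0 u)) \<partial>E1))"
    by (rule PS.product_nn_integral_prod) auto
  also have "\<dots> = (\<Prod>j\<in>{2..K}. ennreal (1 / (1 + c)))"
    using I1[OF c0] by simp
  also have "\<dots> = ennreal ((1 / (1 + c)) ^ (K - 1))"
    using K c0 by (simp add: ennreal_power)
  finally show ?thesis unfolding C_def c_def .
qed



lemma alg:
  fixes t :: real and n :: nat
  assumes t: "0 < t" "t < 1"
  shows "(1 / (1 + real (n + 1) * (1 - t) / t)) / (1 - (1 / (1 + t / (1 - t))) ^ (n + 1))
       = 1 / (1 + real n * (1 - t)) * (1 / (1 + (\<Sum>i=1..n. (1 - t) ^ i)))"
proof -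
  define s where "s = 1 - t"
  have s: "0 < s" "s < 1" "t = 1 - s" using t unfolding s_def by auto
  have h1: "1 / (1 + t / (1 - t)) = s" using s by (simp add: field_simps)
  have ns: "0 < 1 + real n * s" using s by (simp add: add_pos_nonneg)
  have h2: "1 / (1 + real (n + 1) * (1 - t) / t) = t / (1 + real n * s)"
  proof -
    have e: "t + real (n + 1) * s = 1 + real n * s" using s(3) by (simp add: algebra_simps)
    have "1 + real (n + 1) * (1 - t) / t = (t + real (n + 1) * s) / t"
      using s unfolding s_def by (simp add: field_simps)
    then have "1 + real (n + 1) * (1 - t) / t = (1 + real n * s) / t" unfolding e .
    then show ?thesis using s ns by simp
  qed
  define G where "G = 1 + (\<Sum>i=1..n. s ^ i)"
  have G0: "0 < G" unfolding G_def using s by (intro add_pos_nonneg sum_nonneg) auto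
  have "(\<Sum>i<Suc n. s ^ i) = s ^ 0 + (\<Sum>i<n. s ^ Suc i)" by (rule sum.lessThan_Suc_shift)
  also have "(\<Sum>i<n. s ^ Suc i) = (\<Sum>i=Suc 0..n. s ^ i)" by (rule sum.atLeast1_atMost_eq[symmetric])
  finally have "(\<Sum>i<Suc n. s ^ i) = G" unfolding G_def by simp
  then have h3: "1 - s ^ (n + 1) = t * G" using one_diff_power_eq[of s "n+1"] s by simp
  have "(1 / (1 + real (n + 1) * (1 - t) / t)) / (1 - (1 / (1 + t / (1 - t))) ^ (n + 1))
      = (t / (1 + real n * s)) / (t * G)" unfolding h1 h2 h3 ..
  also have "\<dots> = 1 / (1 + real n * s) * (1 / G)" using t G0 ns by (simp add: divide_simps)
  finally show ?thesis unfolding G_def s_def .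
qed

lemma pos_full:
  assumes K: "2 \<le> K" and t: "0 < t" "t < 1" and pos: "\<forall>j\<in>{1..K}. 0 < Z j"
  shows "(cond_focal K t Z = prob_simplex (K - 1)) \<longleftrightarrow> (\<forall>j\<in>{2..K}. (1 - t) * Z 1 \<le> t * Z j)"
proof -
  have z1: "0 < Z 1" using pos K by auto
  have eq: "(LO t (Z 1) (Z (j + 1)) \<le> (if K - 1 = 1 then 1 else 0) \<and> 1 \<le> HI t (Z 1) (Z (j + 1)))
      \<longleftrightarrow> (1 - t) * Z 1 \<le> t * Z (j + 1)" if j: "j \<in> {1..K - 1}" for j
  proof -
    have zj: "0 < Z (j + 1)" using pos j by auto
    have d: "0 < (1 - t) * Z 1" using t z1 by simp
    have "1 \<le> HI t (Z 1) (Z (j + 1)) \<longleftrightarrow> 1 \<le> t * Z (j + 1) / ((1 - t) * Z 1)"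
      using z1 zj unfolding HI_def by (simp add: one_ereal_def)
    also have "\<dots> \<longleftrightarrow> (1 - t) * Z 1 \<le> t * Z (j + 1)" using d by (simp add: le_divide_eq)
    finally show ?thesis using z1 zj unfolding LO_def by simp
  qed
  have "(cond_focal K t Z = prob_simplex (K - 1)) \<longleftrightarrow> (\<forall>j\<in>{1..K - 1}. (1 - t) * Z 1 \<le> t * Z (j + 1))"
    unfolding full_event[OF K t] using eq by blast
  also have "\<dots> \<longleftrightarrow> (\<forall>j\<in>{2..K}. (1 - t) * Z 1 \<le> t * Z j)"
  proof
    assume H: "\<forall>j\<in>{1..K - 1}. (1 - t) * Z 1 \<le> t * Z (j + 1)"
    show "\<forall>j\<in>{2..K}. (1 - t) * Z 1 \<le> t * Z j"
    proof
      fix i assume i: "i \<in> {2..K}"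
      then have "i - 1 \<in> {1..K - 1}" "i - 1 + 1 = i" by auto
      then show "(1 - t) * Z 1 \<le> t * Z i" using H by metis
    qed
  next
    assume H: "\<forall>j\<in>{2..K}. (1 - t) * Z 1 \<le> t * Z j"
    show "\<forall>j\<in>{1..K - 1}. (1 - t) * Z 1 \<le> t * Z (j + 1)"
    proof
      fix j assume "j \<in> {1..K - 1}"
      then have "j + 1 \<in> {2..K}" by auto
      then show "(1 - t) * Z 1 \<le> t * Z (j + 1)" using H by blast
    qed
  qed
  finally show ?thesis .
qed

lemma pos_ne:
  assumes K: "2 \<le> K" and t: "0 < t" "t < 1" and pos: "\<forall>j\<in>{1..K}. 0 < Z j"
  shows "(cond_focal K t Z \<noteq> {}) \<longleftrightarrow> (1 - t) * Z 1 \<le> t * (\<Sum>j\<in>{2..K}. max 0 (Z j))"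
proof -
  have z1: "0 < Z 1" using pos K by auto
  have d: "0 < (1 - t) * Z 1" using t z1 by simp
  have zj: "0 < Z (j + 1)" if "j \<in> {1..K - 1}" for j using pos that by auto
  have LO0: "LO t (Z 1) (Z (j + 1)) = 0" if "j \<in> {1..K - 1}" for j
    using zj[OF that] z1 unfolding LO_def by simp
  have HIq: "HI t (Z 1) (Z (j + 1)) = ereal (t * Z (j + 1) / ((1 - t) * Z 1))" if "j \<in> {1..K - 1}" for j
    using zj[OF that] z1 unfolding HI_def by simp
  have c1: "\<forall>j\<in>{1..K - 1}. ereal (LO t (Z 1) (Z (j + 1))) \<le> HI t (Z 1) (Z (j + 1))"
  proof
    fix j assume j: "j \<in> {1..K - 1}"
    have "0 \<le> t * Z (j + 1) / ((1 - t) * Z 1)" using zj[OF j] t z1 by (intro divide_nonneg_pos) auto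
    then show "ereal (LO t (Z 1) (Z (j + 1))) \<le> HI t (Z 1) (Z (j + 1))" using LO0[OF j] HIq[OF j] by simp
  qed
  have c2: "(\<Sum>j=1..K - 1. LO t (Z 1) (Z (j + 1))) \<le> 1" using LO0 by simp
  have "(\<Sum>j=1..K - 1. HI t (Z 1) (Z (j + 1))) = (\<Sum>j=1..K - 1. ereal (t * Z (j + 1) / ((1 - t) * Z 1)))"
    using HIq by (intro sum.cong) auto
  also have "\<dots> = ereal (t * (\<Sum>j=1..K - 1. Z (j + 1)) / ((1 - t) * Z 1))"
    by (simp add: sum_distrib_left sum_divide_distrib)
  also have "(\<Sum>j=1..K - 1. Z (j + 1)) = (\<Sum>j\<in>{2..K}. max 0 (Z j))"
  proof -
    have "(\<Sum>j\<in>{2..K}. max 0 (Z j)) = (\<Sum>j\<in>{2..K}. Z j)" using pos by (intro sum.cong) auto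
    then show ?thesis using sum_shift1[of K Z] K by simp
  qed
  finally have "1 \<le> (\<Sum>j=1..K - 1. HI t (Z 1) (Z (j + 1))) \<longleftrightarrow>
      1 \<le> t * (\<Sum>j\<in>{2..K}. max 0 (Z j)) / ((1 - t) * Z 1)"
    by (simp add: one_ereal_def)
  also have "\<dots> \<longleftrightarrow> (1 - t) * Z 1 \<le> t * (\<Sum>j\<in>{2..K}. max 0 (Z j))" using d by (simp add: le_divide_eq)
  finally show ?thesis unfolding ne_event[OF K t] using c1 c2 by blast
qed

theorem theorem3:
  fixes K :: nat and t :: real
  assumes "2 \<le> K" and "0 < t" and "t < 1"
  shows "cond_prob (Zmeasure K) (\<lambda>Z. cond_focal K t Z = prob_simplex (K - 1))
                                (\<lambda>Z. cond_focal K t Z \<noteq> {})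
         = 1 / (1 + real (K - 2) * (1 - t)) * (1 / (1 + (\<Sum>i=1..K-2. (1 - t) ^ i)))"
proof -
  note K = assms(1) and t = assms(2,3)
  interpret P: prob_space "Zmeasure K" unfolding Zmeasure_def by (rule prob_space_PiM) (rule prob_E1)
  have AEpos: "AE Z in Zmeasure K. \<forall>j\<in>{1..K}. 0 < Z j"
    unfolding Zmeasure_def by (rule AE_finite_allI) (auto intro!: AE_PiM_component prob_E1 AE_E1_pos)
  define Fp where "Fp Z \<longleftrightarrow> (\<forall>j\<in>{2..K}. (1 - t) * Z 1 \<le> t * Z j)" for Z :: "nat \<Rightarrow> real"
  define Np where "Np Z \<longleftrightarrow> (1 - t) * Z 1 \<le> t * (\<Sum>j\<in>{2..K}. max 0 (Z j))" for Z :: "nat \<Rightarrow> real"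
  define C where "C = {Z \<in> space (Zmeasure K). t * (\<Sum>j\<in>{2..K}. max 0 (Z j)) < (1 - t) * Z 1}"
  have b: "(\<lambda>Z. Z 1) \<in> borel_measurable (Zmeasure K)" using K by (rule Zcoord1)
  have Fs: "{Z \<in> space (Zmeasure K). Fp Z} \<in> sets (Zmeasure K)"
  proof -
    have "Measurable.pred (Zmeasure K) (\<lambda>Z. \<forall>j\<in>{2..K}. (1 - t) * Z 1 \<le> t * Z j)"
    proof (rule pred_intros_finite(3))
      fix j assume j: "j \<in> {2..K}"
      have a: "(\<lambda>Z. Z j) \<in> borel_measurable (Zmeasure K)" using j by (intro Zcoord) auto
      show "Measurable.pred (Zmeasure K) (\<lambda>Z. (1 - t) * Z 1 \<le> t * Z j)"
        unfolding Measurable.pred_def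
        by (rule borel_measurable_le) (intro borel_measurable_times borel_measurable_const a b)+
    qed simp
    then show ?thesis unfolding Fp_def Measurable.pred_def .
  qed
  have Cs: "C \<in> sets (Zmeasure K)"
  proof -
    have "Measurable.pred (Zmeasure K) (\<lambda>Z. t * (\<Sum>j\<in>{2..K}. max 0 (Z j)) < (1 - t) * Z 1)"
      unfolding Measurable.pred_def
      by (rule borel_measurable_less) (intro borel_measurable_times borel_measurable_const b sum_max_meas[OF K])+
    then show ?thesis unfolding C_def Measurable.pred_def .
  qed
  have NC: "{Z \<in> space (Zmeasure K). Np Z} = space (Zmeasure K) - C"
    unfolding C_def Np_def by auto
  have Ns: "{Z \<in> space (Zmeasure K). Np Z} \<in> sets (Zmeasure K)"
    unfolding NC using Cs by auto
  have "cond_prob (Zmeasure K) (\<lambda>Z. cond_focal K t Z = prob_simplex (K - 1)) (\<lambda>Z. cond_focal K t Z \<noteq> {})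
      = cond_prob (Zmeasure K) Fp Np"
  proof (rule P.cond_prob_eq_AE)
    show "AE x in Zmeasure K. cond_focal K t x \<noteq> {} \<longrightarrow> (cond_focal K t x = prob_simplex (K - 1)) = Fp x"
      using AEpos by eventually_elim (use pos_full[OF K t] in \<open>auto simp: Fp_def\<close>)
    show "AE x in Zmeasure K. (cond_focal K t x \<noteq> {}) = Np x"
      using AEpos by eventually_elim (use pos_ne[OF K t] in \<open>auto simp: Np_def\<close>)
  qed (use full_meas[OF K t] ne_meas[OF K t] Fs Ns in auto)
  also have "\<dots> = P.prob {Z \<in> space (Zmeasure K). Fp Z} / P.prob {Z \<in> space (Zmeasure K). Np Z}"
  proof -
    have "Fp Z \<Longrightarrow> Np Z" for Z
    proof -
      assume "Fp Z"
      then have "(1 - t) * Z 1 \<le> t * Z 2" using K unfolding Fp_def by auto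
      also have "\<dots> \<le> t * max 0 (Z 2)" using t by (intro mult_left_mono) auto
      also have "max 0 (Z 2) \<le> (\<Sum>j\<in>{2..K}. max 0 (Z j))"
        using K by (intro member_le_sum) auto
      then have "t * max 0 (Z 2) \<le> t * (\<Sum>j\<in>{2..K}. max 0 (Z j))" using t by (intro mult_left_mono) auto
      finally show "Np Z" unfolding Np_def .
    qed
    then have "{Z \<in> space (Zmeasure K). Fp Z \<and> Np Z} = {Z \<in> space (Zmeasure K). Fp Z}" by blast
    then show ?thesis unfolding cond_prob_def by simp
  qed
  also have "P.prob {Z \<in> space (Zmeasure K). Fp Z} = 1 / (1 + real (K - 1) * (1 - t) / t)"
  proof -
    have "0 \<le> 1 / (1 + real (K - 1) * (1 - t) / t)" using t by simp
    then show ?thesis unfolding measure_def Fp_def F_emeasure[OF K t] by simp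
  qed
  also have "P.prob {Z \<in> space (Zmeasure K). Np Z} = 1 - (1 / (1 + t / (1 - t))) ^ (K - 1)"
  proof -
    have "0 \<le> (1 / (1 + t / (1 - t))) ^ (K - 1)" using t by simp
    then have "P.prob C = (1 / (1 + t / (1 - t))) ^ (K - 1)"
      unfolding measure_def C_def C_emeasure[OF K t] by simp
    then show ?thesis unfolding NC using P.prob_compl[OF Cs] by simp
  qed
  also have "(1 / (1 + real (K - 1) * (1 - t) / t)) / (1 - (1 / (1 + t / (1 - t))) ^ (K - 1))
      = 1 / (1 + real (K - 2) * (1 - t)) * (1 / (1 + (\<Sum>i=1..K-2. (1 - t) ^ i)))"
  proof -
    obtain n where n: "K = n + 2" using K by (metis add.commute le_Suc_ex)
    have "K - 1 = n + 1" "K - 2 = n" using n by auto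
    then show ?thesis using alg[OF t, of n] by simp
  qed
  finally show ?thesis .
qed

end
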